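(* Let $n\ge p\ge1$, $\lambda>0$, $0<\varepsilon<\frac34$, and let $f:\mathbb{R}^{n\times p}\to\mathbb{R}$ be twice continuously differentiable. Let $\mathrm{St}(p,n)^\varepsilon=\{X:\|X^\top X-I_p\|\le\varepsilon\}$; let $L$, $L'$, $\hat L$, $s$, $\mu$, $\nu$, $\mathcal{L}$ be as described in the context; let $L_g>0$ be such that $\nabla\mathcal{L}$ is $L_g$-Lipschitz on $\mathrm{St}(p,n)^\varepsilon$, and let $\mathcal{L}^*$ be a lower bound of $\mathcal{L}$ on $\mathrm{St}(p,n)^\varepsilon$. Let $\tilde a=\sup_{X\in\mathrm{St}(p,n)^\varepsilon}\|\mathrm{skew}(\nabla f(X)X^\top)X\|$ and $\eta^*=\eta^*(\tilde a,\varepsilon,\lambda)$. Let $X_0\in\mathrm{St}(p,n)^\varepsilon$ and $X_{k+1}=X_k-\eta\Lambda(X_k)$ with $\eta\le\min\left(\frac1{2L_g},\frac{\nu}{4\lambda^2L_g(1+\varepsilon)},\eta^*\right)$. Then for every $K\ge1$, $$\frac1K\sum_{k=1}^K\|\mathrm{grad}f(X_k)\|^2\le\frac{4(\mathcal{L}(X_0)-\mathcal{L}^* )}{\eta K}\quad\text{and}\quad\frac1K\sum_{k=1}^K\mathcal{N}(X_k)\le\frac{2(\mathcal{L}(X_0)-\mathcal{L}^* )}{\eta\nu K}.$$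
   Context: $\|\cdot\|$, $\langle\cdot,\cdot\rangle$: Frobenius norm and inner product; $\mathrm{sym}(M)=\frac12(M+M^\top)$, $\mathrm{skew}(M)=\frac12(M-M^\top)$; $\mathcal{N}(X)=\frac14\|X^\top X-I_p\|^2$; $\mathrm{grad}f(X)=\mathrm{skew}(\nabla f(X)X^\top)X$; $\Lambda(X)=\mathrm{grad}f(X)+\lambda X(X^\top X-I_p)$. $L>0$ is such that $\nabla f$ is $L$-Lipschitz on $\mathrm{St}(p,n)^\varepsilon$, $L'=\max_{\mathrm{St}(p,n)^\varepsilon}\|\nabla f\|$, $\hat L=\max(L,L')$, $s=\sup_{X\in\mathrm{St}(p,n)^\varepsilon}\|\mathrm{sym}(X^\top\nabla f(X))\|$, $\mu\ge\frac{2}{3-4\varepsilon}\big(L(1-\varepsilon)+3s+\hat L^2\frac{(1+\varepsilon)^2}{\lambda(1-\varepsilon)}\big)$, $\nu=\lambda\mu$, and $\mathcal{L}(X)=f(X)-\frac12\langle\mathrm{sym}(X^\top\nabla f(X)),X^\top X-I_p\rangle+\mu\mathcal{N}(X)$. The safeguard step is $\eta^*(\tilde a,\varepsilon,\lambda)=\min\{Q,\frac1{2\lambda}\}$ with $Q=\inf_{a\in(0,\tilde a],d\in(0,\varepsilon]}\frac{\lambda(1-\varepsilon)d+a\sqrt{(\varepsilon-d)/2}}{a^2+\lambda^2(1+\varepsilon)d^2}$. *)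

theory Defs
  imports "HOL-Analysis.Analysis"
begin

text \<open>Matrices in R^(n x p) are rendered as real^'p^'n (n rows, p columns).
  The inner product and norm on this type are the Frobenius ones.\<close>

definition msym :: "real^'m^'m \<Rightarrow> real^'m^'m" where
  "msym M = (1/2) *\<^sub>R (M + transpose M)"

definition mskew :: "real^'m^'m \<Rightarrow> real^'m^'m" where
  "mskew M = (1/2) *\<^sub>R (M - transpose M)"

definition StEps :: "real \<Rightarrow> (real^'p^'n) set" where
  "StEps \<epsilon> = {X. norm (transpose X ** X - mat 1) \<le> \<epsilon>}"

definition Ncons :: "real^'p^'n \<Rightarrow> real" where
  "Ncons X = (1/4) * (norm (transpose X ** X - mat 1))^2"

text \<open>Riemannian gradient, given the Euclidean gradient G = \<nabla>f.\<close>
definition rgrad :: "(real^'p^'n \<Rightarrow> real^'p^'n) \<Rightarrow> real^'p^'n \<Rightarrow> real^'p^'n" where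
  "rgrad G X = mskew (G X ** transpose X) ** X"

definition Lambda_field :: "(real^'p^'n \<Rightarrow> real^'p^'n) \<Rightarrow> real \<Rightarrow> real^'p^'n \<Rightarrow> real^'p^'n" where
  "Lambda_field G lam X = rgrad G X + lam *\<^sub>R (X ** (transpose X ** X - mat 1))"

definition merit :: "(real^'p^'n \<Rightarrow> real) \<Rightarrow> (real^'p^'n \<Rightarrow> real^'p^'n) \<Rightarrow> real \<Rightarrow> real^'p^'n \<Rightarrow> real" where
  "merit f G \<mu> X = f X - (1/2) * (msym (transpose X ** G X) \<bullet> (transpose X ** X - mat 1))
                    + \<mu> * Ncons X"

text \<open>Safeguard step size. When the range (0, a~] is empty (a~ = 0), the infimum over
  the empty set is read as +infinity, so the min is 1/(2 lambda).\<close>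
definition eta_star :: "real \<Rightarrow> real \<Rightarrow> real \<Rightarrow> real" where
  "eta_star atil \<epsilon> lam =
     (if atil > 0 then
        min (Inf {(lam * (1 - \<epsilon>) * d + a * sqrt ((\<epsilon> - d) / 2)) / (a^2 + lam^2 * (1 + \<epsilon>) * d^2)
                 | a d. 0 < a \<and> a \<le> atil \<and> 0 < d \<and> d \<le> \<epsilon>})
            (1 / (2 * lam))
      else 1 / (2 * lam))"

end

theory Submission
  imports Defs
begin


lemma minner: "inner (M::real^'b^'a) N = (\<Sum>i\<in>UNIV. \<Sum>j\<in>UNIV. M$i$j * N$i$j)"
  by (simp add: inner_vec_def)

lemma mnorm2: "(norm (M::real^'b^'a))^2 = (\<Sum>i\<in>UNIV. \<Sum>j\<in>UNIV. (M$i$j)^2)"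
  by (simp only: power2_norm_eq_inner minner) (simp add: power2_eq_square)

lemma sum3_rot: "(\<Sum>a\<in>UNIV. \<Sum>b\<in>UNIV. \<Sum>n\<in>UNIV. g n a b) = (\<Sum>n\<in>UNIV. \<Sum>a\<in>UNIV. \<Sum>b\<in>UNIV. (g n a b::real))"
proof -
  have "(\<Sum>a\<in>UNIV. \<Sum>b\<in>UNIV. \<Sum>n\<in>UNIV. g n a b) = (\<Sum>a\<in>UNIV. \<Sum>n\<in>UNIV. \<Sum>b\<in>UNIV. g n a b)"
    by (rule sum.cong[OF refl], rule sum.swap)
  also have "\<dots> = (\<Sum>n\<in>UNIV. \<Sum>a\<in>UNIV. \<Sum>b\<in>UNIV. g n a b)" by (rule sum.swap)
  finally show ?thesis .
qed

lemma sum3_rev: "(\<Sum>c\<in>UNIV. \<Sum>b\<in>UNIV. \<Sum>a\<in>UNIV. g c b a) = (\<Sum>a\<in>UNIV. \<Sum>b\<in>UNIV. \<Sum>c\<in>UNIV. (g c b a::real))"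
proof -
  have "(\<Sum>c\<in>UNIV. \<Sum>b\<in>UNIV. \<Sum>a\<in>UNIV. g c b a) = (\<Sum>c\<in>UNIV. \<Sum>a\<in>UNIV. \<Sum>b\<in>UNIV. g c b a)"
    by (rule sum.cong[OF refl], rule sum.swap)
  also have "\<dots> = (\<Sum>a\<in>UNIV. \<Sum>c\<in>UNIV. \<Sum>b\<in>UNIV. g c b a)" by (rule sum.swap)
  also have "\<dots> = (\<Sum>a\<in>UNIV. \<Sum>b\<in>UNIV. \<Sum>c\<in>UNIV. g c b a)"
    by (rule sum.cong[OF refl], rule sum.swap)
  finally show ?thesis .
qed

lemma inner_mm_left:
  fixes A :: "real^'k^'m" and B :: "real^'n^'k" and C :: "real^'n^'m"
  shows "inner (A ** B) C = inner B (transpose A ** C)"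
  unfolding minner matrix_matrix_mult_def transpose_def
  apply (simp add: sum_distrib_left sum_distrib_right mult_ac)
  using sum3_rev[of "\<lambda>c b a. A$c$a * (B$a$b * C$c$b)"] by simp

lemma inner_transpose: "inner (transpose (A::real^'b^'a)) (transpose B) = inner A B"
  unfolding minner transpose_def by (simp, subst sum.swap, simp)

lemma norm_transpose: "norm (transpose (A::real^'b^'a)) = norm A"
  by (simp add: norm_eq_sqrt_inner inner_transpose)

lemma inner_mm_right:
  fixes A :: "real^'k^'m" and B :: "real^'n^'k" and C :: "real^'n^'m"
  shows "inner (A ** B) C = inner A (C ** transpose B)"
proof -
  have "inner (A ** B) C = inner (transpose (A ** B)) (transpose C)" by (simp add: inner_transpose)
  also have "\<dots> = inner (transpose B ** transpose A) (transpose C)" by (simp add: matrix_transpose_mul)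
  also have "\<dots> = inner (transpose A) (B ** transpose C)" by (simp add: inner_mm_left)
  also have "\<dots> = inner (transpose A) (transpose (C ** transpose B))" by (simp add: matrix_transpose_mul)
  also have "\<dots> = inner A (C ** transpose B)" by (simp add: inner_transpose)
  finally show ?thesis .
qed

lemma norm_mm_le:
  fixes A :: "real^'k^'m" and B :: "real^'n^'k"
  shows "norm (A ** B) \<le> norm A * norm B"
proof -
  have "(norm (A ** B))^2 = (\<Sum>i\<in>UNIV. \<Sum>j\<in>UNIV. (\<Sum>k\<in>UNIV. A$i$k * B$k$j)^2)"
    by (simp add: mnorm2 matrix_matrix_mult_def)
  also have "\<dots> \<le> (\<Sum>i\<in>UNIV. \<Sum>j\<in>UNIV. (\<Sum>k\<in>UNIV. (A$i$k)^2) * (\<Sum>k\<in>UNIV. (B$k$j)^2))"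
    by (intro sum_mono Cauchy_Schwarz_ineq_sum)
  also have "\<dots> = (\<Sum>i\<in>UNIV. \<Sum>k\<in>UNIV. (A$i$k)^2) * (\<Sum>j\<in>UNIV. \<Sum>k\<in>UNIV. (B$k$j)^2)"
    by (rule sum_product[symmetric])
  also have "\<dots> = (\<Sum>i\<in>UNIV. \<Sum>k\<in>UNIV. (A$i$k)^2) * (\<Sum>k\<in>UNIV. \<Sum>j\<in>UNIV. (B$k$j)^2)"
  proof -
    have "(\<Sum>j\<in>UNIV. \<Sum>k\<in>UNIV. (B$k$j)^2) = (\<Sum>k\<in>UNIV. \<Sum>j\<in>UNIV. (B$k$j)^2)"
      by (rule sum.swap)
    then show ?thesis by (simp only:)
  qed
  also have "\<dots> = (norm A * norm B)^2" by (simp only: mnorm2 power_mult_distrib)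
  finally show ?thesis by (simp add: power2_le_iff_abs_le)
qed

lemma transpose_add: "transpose (A + B) = transpose A + transpose (B::real^'b^'a)"
  by (simp add: transpose_def vec_eq_iff)
lemma transpose_diff: "transpose (A - B) = transpose A - transpose (B::real^'b^'a)"
  by (simp add: transpose_def vec_eq_iff)
lemma transpose_minus: "transpose (- A) = - transpose (A::real^'b^'a)"
  by (simp add: transpose_def vec_eq_iff)
lemma transpose_zero: "transpose (0::real^'b^'a) = 0"
  by (simp add: transpose_def vec_eq_iff)

lemma mm_add_right: "(A + B) ** (C::real^'c^'b) = A ** C + (B::real^'b^'a) ** C"
  by (simp add: matrix_matrix_mult_def vec_eq_iff sum.distrib algebra_simps)
lemma mm_diff_right: "(A - B) ** (C::real^'c^'b) = A ** C - (B::real^'b^'a) ** C"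
  by (simp add: matrix_matrix_mult_def vec_eq_iff sum_subtractf algebra_simps)
lemma mm_diff_left: "(C::real^'b^'a) ** (A - B) = C ** A - C ** (B::real^'c^'b)"
  by (simp add: matrix_matrix_mult_def vec_eq_iff sum_subtractf algebra_simps)
lemma mm_minus_left: "(- A) ** (C::real^'c^'b) = - ((A::real^'b^'a) ** C)"
  by (simp add: matrix_matrix_mult_def vec_eq_iff sum_negf)
lemma mm_minus_right: "(C::real^'b^'a) ** (- A) = - (C ** (A::real^'c^'b))"
  by (simp add: matrix_matrix_mult_def vec_eq_iff sum_negf)
lemma mm_scale_left: "(r *\<^sub>R A) ** (C::real^'c^'b) = r *\<^sub>R ((A::real^'b^'a) ** C)"
  by (simp add: scalar_matrix_assoc)
lemma mm_scale_right: "(C::real^'b^'a) ** (r *\<^sub>R A) = r *\<^sub>R (C ** (A::real^'c^'b))"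
  by (simp add: matrix_scalar_ac scalar_matrix_assoc)

lemma inner_sym_skew:
  fixes S K :: "real^'a^'a"
  assumes "transpose S = S" "transpose K = - K"
  shows "inner S K = 0"
proof -
  have "inner S K = inner (transpose S) (transpose K)" by (simp add: inner_transpose)
  also have "\<dots> = - inner S K" using assms by (simp add: inner_minus_right)
  finally show ?thesis by simp
qed

lemma bb_mm: "bounded_bilinear (\<lambda>(A::real^'k^'m) (B::real^'n^'k). A ** B)"
  apply (rule bounded_bilinear.intro)
  apply (simp_all add: mm_add_right matrix_add_ldistrib mm_scale_left mm_scale_right)
  apply (rule exI[of _ 1]) using norm_mm_le by auto

lemma bl_transpose: "bounded_linear (transpose :: real^'b^'a \<Rightarrow> real^'a^'b)"
  apply (rule bounded_linear_intro[of _ 1])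
  by (simp_all add: transpose_add transpose_scalar norm_transpose)


lemmas mm_simps = matrix_add_ldistrib mm_add_right mm_diff_left mm_diff_right mm_scale_left
  mm_scale_right mm_minus_left mm_minus_right transpose_add transpose_diff transpose_scalar
  transpose_minus matrix_transpose_mul matrix_mul_assoc

lemma msym_T: "transpose (msym M) = msym (M::real^'a^'a)"
  by (simp add: msym_def transpose_add transpose_scalar add.commute)
lemma mskew_T: "transpose (mskew M) = - mskew (M::real^'a^'a)"
  by (simp add: mskew_def transpose_diff transpose_scalar algebra_simps)
lemma msym_mskew: "msym M + mskew M = (M::real^'a^'a)"
  by (simp add: msym_def mskew_def algebra_simps scaleR_2[symmetric])

lemma inner_msym:
  assumes "transpose D = D"
  shows "inner (msym M) D = inner (M::real^'a^'a) D"
proof -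
  have "inner (transpose M) D = inner M D"
    using inner_transpose[of M D] assms by simp
  then show ?thesis by (simp add: msym_def inner_add_left)
qed

lemma D_T: "transpose (transpose X ** X - mat 1) = transpose X ** (X::real^'p^'n) - mat 1"
  by (simp add: transpose_diff matrix_transpose_mul)

lemma skew_cancel:
  fixes X :: "real^'p^'n" and M :: "real^'n^'n"
  shows "transpose X ** (mskew M ** X) + transpose (mskew M ** X) ** X = 0"
  by (simp add: matrix_transpose_mul mskew_T mm_minus_left mm_minus_right matrix_mul_assoc)

lemma E_main:
  fixes X :: "real^'p^'n" and M :: "real^'n^'n" and D :: "real^'p^'p"
  assumes XX: "transpose X ** X = D + mat 1" and DT: "transpose D = D"
  shows "transpose X ** (mskew M ** X + lam *\<^sub>R (X ** D)) + transpose (mskew M ** X + lam *\<^sub>R (X ** D)) ** X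
     = (2*lam) *\<^sub>R (D + D ** D)"
proof -
  have 1: "transpose X ** (X ** D) = D ** D + D"
    by (simp add: matrix_mul_assoc XX mm_add_right)
  have 2: "transpose (X ** D) ** X = D ** D + D"
    by (simp add: matrix_transpose_mul DT flip: matrix_mul_assoc) (simp add: XX matrix_add_ldistrib)
  have "transpose X ** (mskew M ** X + lam *\<^sub>R (X ** D)) + transpose (mskew M ** X + lam *\<^sub>R (X ** D)) ** X
     = (transpose X ** (mskew M ** X) + transpose (mskew M ** X) ** X) + lam *\<^sub>R (transpose X ** (X ** D) + transpose (X ** D) ** X)"
    by (simp add: matrix_add_ldistrib mm_add_right transpose_add transpose_scalar mm_scale_left mm_scale_right algebra_simps)
  also have "\<dots> = (2*lam) *\<^sub>R (D + D ** D)"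
    by (simp only: skew_cancel 1 2) (simp add: algebra_simps scaleR_2[symmetric])
  finally show ?thesis .
qed

lemma Y_expand:
  fixes X L :: "real^'p^'n" and D :: "real^'p^'p"
  assumes XX: "transpose X ** X = D + mat 1"
  shows "transpose (X - t *\<^sub>R L) ** (X - t *\<^sub>R L) - mat 1
     = D - t *\<^sub>R (transpose X ** L + transpose L ** X) + (t^2) *\<^sub>R (transpose L ** L)"
  by (simp add: mm_diff_left mm_diff_right transpose_diff transpose_scalar mm_scale_left mm_scale_right XX
       algebra_simps power2_eq_square)

lemma norm_XD2:
  fixes X :: "real^'p^'n" and D :: "real^'p^'p"
  assumes XX: "transpose X ** X = D + mat 1" and DT: "transpose D = D"
  shows "(norm (X ** D))^2 = (norm D)^2 + inner D (D ** D)"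
proof -
  have "(norm (X ** D))^2 = inner (X ** D) (X ** D)" by (simp add: power2_norm_eq_inner)
  also have "\<dots> = inner D (transpose X ** (X ** D))" by (rule inner_mm_left)
  also have "\<dots> = inner D (D ** D + D)" by (simp add: matrix_mul_assoc XX mm_add_right)
  finally show ?thesis by (simp add: inner_add_right power2_norm_eq_inner)
qed

lemma norm_XD_bounds:
  fixes X :: "real^'p^'n" and D :: "real^'p^'p"
  assumes XX: "transpose X ** X = D + mat 1" and DT: "transpose D = D"
  shows "(1 - norm D) * (norm D)^2 \<le> (norm (X ** D))^2" "(norm (X ** D))^2 \<le> (1 + norm D) * (norm D)^2"
proof -
  have "\<bar>inner D (D ** D)\<bar> \<le> norm D * norm (D ** D)" by (rule Cauchy_Schwarz_ineq2)
  also have "\<dots> \<le> norm D * (norm D * norm D)" by (intro mult_left_mono norm_mm_le) auto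
  finally have b: "\<bar>inner D (D ** D)\<bar> \<le> norm D * (norm D)^2" by (simp add: power2_eq_square)
  show "(1 - norm D) * (norm D)^2 \<le> (norm (X ** D))^2" "(norm (X ** D))^2 \<le> (1 + norm D) * (norm D)^2"
    using norm_XD2[OF XX DT] b by (auto simp: algebra_simps abs_le_iff)
qed

lemma norm_MX:
  fixes X :: "real^'p^'n" and D :: "real^'p^'p" and M :: "real^'n^'m"
  assumes XX: "transpose X ** X = D + mat 1"
  shows "(norm (M ** X))^2 \<le> (1 + norm D) * (norm M)^2"
proof -
  let ?a = "norm (M ** X)"
  have "?a^2 = inner (M ** X) (M ** X)" by (simp add: power2_norm_eq_inner)
  also have "\<dots> = inner M ((M ** X) ** transpose X)" by (rule inner_mm_right)
  also have "\<dots> \<le> norm M * norm ((M ** X) ** transpose X)" by (rule Cauchy_Schwarz_ineq2[THEN abs_le_D1])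
  finally have 1: "?a^2 \<le> norm M * norm ((M ** X) ** transpose X)" .
  have "(norm ((M ** X) ** transpose X))^2 = inner ((M ** X) ** transpose X) ((M ** X) ** transpose X)"
    by (simp add: power2_norm_eq_inner)
  also have "\<dots> = inner (M ** X) ((M ** X) ** transpose X ** X)"
    using inner_mm_right[of "M ** X" "transpose X"] by simp
  also have "\<dots> = inner (M ** X) (M ** X) + inner (M ** X) ((M ** X) ** D)"
    by (simp add: XX flip: matrix_mul_assoc) (simp add: matrix_add_ldistrib inner_add_right)
  also have "\<dots> \<le> ?a^2 + ?a * (?a * norm D)"
  proof -
    have "inner (M ** X) ((M ** X) ** D) \<le> ?a * norm ((M ** X) ** D)" by (rule Cauchy_Schwarz_ineq2[THEN abs_le_D1])
    also have "\<dots> \<le> ?a * (?a * norm D)" by (intro mult_left_mono norm_mm_le) auto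
    finally show ?thesis by (simp add: power2_norm_eq_inner)
  qed
  finally have 2: "(norm ((M ** X) ** transpose X))^2 \<le> (1 + norm D) * ?a^2" by (simp add: algebra_simps power2_eq_square)
  have "(?a^2)^2 \<le> (norm M)^2 * (norm ((M ** X) ** transpose X))^2"
    using 1 by (metis norm_ge_zero power_mono power_mult_distrib zero_le_power2)
  also have "\<dots> \<le> (norm M)^2 * ((1 + norm D) * ?a^2)" by (intro mult_left_mono 2) auto
  finally have 3: "(?a^2)^2 \<le> (norm M)^2 * ((1 + norm D) * ?a^2)" .
  show ?thesis
  proof (cases "?a = 0")
    case True then show ?thesis by simp
  next
    case False
    then have "?a^2 > 0" by simp
    with 3 have "?a^2 * ?a^2 \<le> ((1 + norm D) * (norm M)^2) * ?a^2" by (simp add: power2_eq_square algebra_simps)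
    with \<open>?a^2 > 0\<close> show ?thesis using mult_right_le_imp_le by blast
  qed
qed


lemma R1:
  fixes d s \<epsilon> :: real
  assumes "0 \<le> d" "d \<le> \<epsilon>" "\<epsilon> < 1" "0 \<le> s" "s \<le> 1/2"
  shows "(1-2* s)*d + (2* s-s^2)*d^2 + s^2*d^3 \<le> \<epsilon>"
proof -
  have "s * s \<le> s * 1" using assms by (intro mult_left_mono) auto
  then have c1: "0 \<le> 1-2* s" "0 \<le> 2* s-s^2" using assms by (auto simp: power2_eq_square)
  have "(1-2* s)*d + (2* s-s^2)*d^2 + s^2*d^3 \<le> (1-2* s)*\<epsilon> + (2* s-s^2)*\<epsilon>^2 + s^2*\<epsilon>^3"
    using assms c1 by (intro add_mono mult_left_mono power_mono) auto
  also have "(2* s-s^2)*\<epsilon>^2 \<le> (2* s-s^2)*\<epsilon>" 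
    proof -
    have "\<epsilon> * \<epsilon> \<le> \<epsilon> * 1" using assms by (intro mult_left_mono) auto
    then show ?thesis using c1 by (intro mult_left_mono) (auto simp: power2_eq_square)
  qed
  also have "s^2*\<epsilon>^3 \<le> s^2*\<epsilon>"
  proof -
    have "\<epsilon>^3 \<le> \<epsilon>" using assms by (simp add: power3_eq_cube) (metis assms(1,2) le_less_trans less_eq_real_def mult_le_one mult_left_le order.trans mult_nonneg_nonneg)
    then show ?thesis by (simp add: mult_left_mono)
  qed
  finally have "(1-2* s)*d + (2* s-s^2)*d^2 + s^2*d^3 \<le> (1-2* s)*\<epsilon> + (2* s-s^2)*\<epsilon> + s^2*\<epsilon>" by simp
  then show ?thesis by (simp add: algebra_simps)
qed

lemma R2a:
  fixes a d t lam \<epsilon> :: real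
  assumes "0 < a" "0 < d" "d \<le> \<epsilon>" "\<epsilon> < 1" "0 < lam" "0 \<le> t"
    and tle: "t \<le> (lam*(1-\<epsilon>)*d + a* sqrt((\<epsilon>-d)/2)) / (a^2 + lam^2*(1+\<epsilon>)*d^2)"
  shows "t^2 * (a^2 + lam^2*(1+\<epsilon>)*d^2) - 2*t*(lam*(1-\<epsilon>)*d) \<le> \<epsilon> - d"
proof -
  define u where "u = lam*(1-\<epsilon>)*d"
  define v where "v = a* sqrt((\<epsilon>-d)/2)"
  define B where "B = a^2 + lam^2*(1+\<epsilon>)*d^2"
  have Bpos: "B > 0" unfolding B_def using assms by (intro add_pos_nonneg) (auto intro!: mult_nonneg_nonneg)
  have u0: "u \<ge> 0" "v \<ge> 0" unfolding u_def v_def using assms by auto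
  have v2: "v^2 = a^2 * ((\<epsilon>-d)/2)" unfolding v_def using assms by (simp add: power_mult_distrib)
  have v2B: "v^2 \<le> B * ((\<epsilon>-d)/2)" unfolding v2 B_def using assms
    by (intro mult_right_mono) (auto intro!: mult_nonneg_nonneg)
  have tB: "t * B \<le> u + v" using tle Bpos unfolding u_def v_def B_def by (simp add: pos_le_divide_eq)
  have "t^2 * B - 2*t*u \<le> t * (v - u)"
  proof -
    have "t^2 * B = t * (t * B)" by (simp add: power2_eq_square)
    also have "\<dots> \<le> t * (u + v)" using tB assms by (intro mult_left_mono) auto
    finally show ?thesis by (simp add: algebra_simps)
  qed
  also have "t * (v - u) \<le> \<epsilon> - d"
  proof (cases "v \<le> u")
    case True
    have "t * (v - u) \<le> 0" using True assms by (intro mult_nonneg_nonpos) auto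
    then show ?thesis using assms by simp
  next
    case False
    have "t * (v - u) \<le> ((u+v)/B) * (v - u)"
      using False tle by (intro mult_right_mono) (auto simp: u_def v_def B_def)
    also have "\<dots> = (v^2 - u^2)/B" by (simp add: power2_eq_square algebra_simps)
    also have "\<dots> \<le> v^2 / B" using Bpos by (simp add: divide_right_mono)
    also have "\<dots> \<le> (\<epsilon>-d)/2" using v2B Bpos by (simp add: pos_divide_le_eq mult.commute)
    also have "\<dots> \<le> \<epsilon> - d" using assms by simp
    finally show ?thesis .
  qed
  finally show ?thesis unfolding u_def B_def .
qed

lemma aux3: "(x::real) \<le> y + z \<Longrightarrow> y \<le> (x - z)/2 \<Longrightarrow> 0 < x - z \<Longrightarrow> False" by argo

lemma R2b:
  fixes a t lam \<epsilon> :: real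
  assumes "0 < a" "0 < \<epsilon>" "\<epsilon> < 1" "0 < lam" "0 \<le> t"
    and tle: "\<And>d. 0 < d \<Longrightarrow> d \<le> \<epsilon> \<Longrightarrow> t \<le> (lam*(1-\<epsilon>)*d + a* sqrt((\<epsilon>-d)/2)) / (a^2 + lam^2*(1+\<epsilon>)*d^2)"
  shows "t^2 * a^2 \<le> \<epsilon>"
proof -
  have key: "t * a^2 \<le> lam*(1-\<epsilon>)*d + a* sqrt(\<epsilon>/2)" if "0 < d" "d \<le> \<epsilon>" for d
  proof -
    have B: "a^2 + lam^2*(1+\<epsilon>)*d^2 > 0" using assms by (intro add_pos_nonneg) auto
    have "t * (a^2 + lam^2*(1+\<epsilon>)*d^2) \<le> lam*(1-\<epsilon>)*d + a* sqrt((\<epsilon>-d)/2)"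
      using tle[OF that] B by (simp add: pos_le_divide_eq)
    moreover have "t * a^2 \<le> t * (a^2 + lam^2*(1+\<epsilon>)*d^2)" using assms by (intro mult_left_mono) auto
    moreover have "a* sqrt((\<epsilon>-d)/2) \<le> a* sqrt(\<epsilon>/2)" using assms that by (intro mult_left_mono) auto
    ultimately show ?thesis by linarith
  qed
  have ta: "t * a^2 \<le> a* sqrt(\<epsilon>/2)"
  proof (rule ccontr)
    assume "\<not> ?thesis"
    then have del: "t * a^2 - a* sqrt(\<epsilon>/2) > 0" by simp
    define d where "d = min \<epsilon> ((t * a^2 - a* sqrt(\<epsilon>/2)) / (2*lam*(1-\<epsilon>)))"
    have dpos: "0 < d" "d \<le> \<epsilon>" unfolding d_def using assms del by auto
    have "lam*(1-\<epsilon>)*d \<le> lam*(1-\<epsilon>)*((t * a^2 - a* sqrt(\<epsilon>/2)) / (2*lam*(1-\<epsilon>)))"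
      unfolding d_def using assms by (intro mult_left_mono) auto
    also have "\<dots> = (t * a^2 - a* sqrt(\<epsilon>/2))/2" using assms by (simp add: field_simps)
    finally have "lam*(1-\<epsilon>)*d \<le> (t * a^2 - a* sqrt(\<epsilon>/2))/2" .
    then show False using aux3 key[OF dpos] del by blast
  qed
  then have "t * a \<le> sqrt(\<epsilon>/2)" using assms by (simp add: power2_eq_square)
  then have "(t*a)^2 \<le> (sqrt(\<epsilon>/2))^2" using assms by (intro power_mono) auto
  then show ?thesis using assms by (simp add: power_mult_distrib)
qed


definition Pfun :: "real \<Rightarrow> real \<Rightarrow> real \<Rightarrow> real \<Rightarrow> real" where
  "Pfun lam \<epsilon> a d = (lam * (1 - \<epsilon>) * d + a * sqrt ((\<epsilon> - d) / 2)) / (a^2 + lam^2 * (1 + \<epsilon>) * d^2)"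

lemma cross_zero:
  fixes X :: "real^'p^'n" and M :: "real^'n^'n" and D :: "real^'p^'p"
  assumes DT: "transpose D = D"
  shows "inner (mskew M ** X) (X ** D) = 0"
proof -
  have "inner (mskew M ** X) (X ** D) = inner (mskew M) ((X ** D) ** transpose X)" by (rule inner_mm_right)
  also have "\<dots> = inner ((X ** D) ** transpose X) (mskew M)" by (rule inner_commute)
  also have "\<dots> = 0"
    by (rule inner_sym_skew) (simp_all add: mskew_T matrix_transpose_mul DT matrix_mul_assoc)
  finally show ?thesis .
qed

lemma norm_Lm2:
  fixes X :: "real^'p^'n" and M :: "real^'n^'n" and D :: "real^'p^'p"
  assumes DT: "transpose D = D"
  shows "(norm (mskew M ** X + lam *\<^sub>R (X ** D)))^2 = (norm (mskew M ** X))^2 + lam^2 * (norm (X ** D))^2"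
  using cross_zero[OF DT, of M X]
  apply (simp only: power2_norm_eq_inner)
  by (simp add: inner_add_left inner_add_right inner_commute power2_eq_square)

lemma norm_TT: "norm (transpose L ** (L::real^'p^'n)) \<le> (norm L)^2"
  using norm_mm_le[of "transpose L" L] by (simp add: norm_transpose power2_eq_square)

lemma safeguard:
  fixes X :: "real^'p^'n" and M :: "real^'n^'n"
  assumes nD: "norm (transpose X ** X - mat 1) \<le> \<epsilon>" and e: "0 < \<epsilon>" "\<epsilon> < 1" and lam: "0 < lam"
    and t: "0 \<le> t" "t * lam \<le> 1/2"
    and cond: "norm (mskew M ** X) > 0 \<Longrightarrow> (\<forall>d. 0 < d \<and> d \<le> \<epsilon> \<longrightarrow> t \<le> Pfun lam \<epsilon> (norm (mskew M ** X)) d)"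
  shows "norm (transpose (X - t *\<^sub>R (mskew M ** X + lam *\<^sub>R (X ** (transpose X ** X - mat 1))))
               ** (X - t *\<^sub>R (mskew M ** X + lam *\<^sub>R (X ** (transpose X ** X - mat 1)))) - mat 1) \<le> \<epsilon>"
proof -
  define D where "D = transpose X ** X - mat 1"
  define Lm where "Lm = mskew M ** X + lam *\<^sub>R (X ** D)"
  define a where "a = norm (mskew M ** X)"
  define d where "d = norm D"
  define s where "s = t * lam"
  have XX: "transpose X ** X = D + mat 1" by (simp add: D_def)
  have DT: "transpose D = D" unfolding D_def by (rule D_T)
  have d: "0 \<le> d" "d \<le> \<epsilon>" using nD by (auto simp: d_def D_def)
  have s: "0 \<le> s" "s \<le> 1/2" using t lam by (auto simp: s_def)
  have E: "transpose (X - t *\<^sub>R Lm) ** (X - t *\<^sub>R Lm) - mat 1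
        = D - t *\<^sub>R ((2*lam) *\<^sub>R (D + D ** D)) + t^2 *\<^sub>R (transpose Lm ** Lm)"
    using Y_expand[OF XX, of t Lm] E_main[OF XX DT, of M lam] unfolding Lm_def by simp
  have DD: "norm (D ** D) \<le> d^2" using norm_mm_le[of D D] by (simp add: d_def power2_eq_square)
  have "norm (transpose X' ** X' - mat 1) \<le> \<epsilon>" if X': "X' = X - t *\<^sub>R Lm" for X'
  proof (cases "a = 0")
    case True
    then have psi0: "mskew M ** X = 0" by (simp add: a_def)
    have LL: "transpose Lm ** Lm = lam^2 *\<^sub>R (D ** D ** D + D ** D)"
    proof -
      have "transpose (X ** D) ** (X ** D) = D ** (transpose X ** X) ** D"
        by (simp add: matrix_transpose_mul DT matrix_mul_assoc)
      also have "\<dots> = D ** D ** D + D ** D" by (simp add: XX matrix_add_ldistrib mm_add_right)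
      finally show ?thesis unfolding Lm_def psi0
        by (simp add: transpose_scalar mm_scale_left mm_scale_right power2_eq_square)
    qed
    have E2: "transpose X' ** X' - mat 1 = (1 - 2* s) *\<^sub>R D - (2* s - s^2) *\<^sub>R (D ** D) + s^2 *\<^sub>R (D ** D ** D)"
      unfolding X' E LL s_def by (simp add: algebra_simps power2_eq_square)
    have "norm (transpose X' ** X' - mat 1) \<le> norm ((1 - 2* s) *\<^sub>R D) + norm ((2* s - s^2) *\<^sub>R (D ** D)) + norm (s^2 *\<^sub>R (D ** D ** D))"
      unfolding E2 by (rule order_trans[OF norm_triangle_ineq] add_mono norm_triangle_ineq4)+ simp
    also have "\<dots> \<le> (1-2* s)*d + (2* s-s^2)*d^2 + s^2*d^3"
    proof -
      have "s * s \<le> s * 1" using s by (intro mult_left_mono) auto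
      then have c: "0 \<le> 1 - 2* s" "0 \<le> 2* s - s^2" using s by (auto simp: power2_eq_square)
      have DDD: "norm (D ** D ** D) \<le> d^3"
      proof -
        have "norm (D ** D ** D) \<le> norm (D ** D) * norm D" by (rule norm_mm_le)
        also have "\<dots> \<le> d^2 * d" using DD unfolding d_def by (rule mult_mono) auto
        finally show ?thesis by (simp add: power3_eq_cube power2_eq_square)
      qed
      show ?thesis using c DD DDD
        by (simp add: d_def[symmetric]) (intro add_mono mult_left_mono; simp)
    qed
    also have "\<dots> \<le> \<epsilon>" using R1[OF d e(2) s] .
    finally show ?thesis .
  next
    case False
    then have apos: "a > 0" by (simp add: a_def)
    have cnd: "\<And>d'. 0 < d' \<Longrightarrow> d' \<le> \<epsilon> \<Longrightarrow> t \<le> Pfun lam \<epsilon> a d'" using cond apos by (auto simp: a_def)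
    have nL: "(norm Lm)^2 \<le> a^2 + lam^2 * ((1+\<epsilon>) * d^2)"
    proof -
      have "(norm (X ** D))^2 \<le> (1 + d) * d^2" using norm_XD_bounds(2)[OF XX DT] by (simp add: d_def)
      also have "\<dots> \<le> (1+\<epsilon>) * d^2" using d by (intro mult_right_mono) auto
      finally show ?thesis unfolding Lm_def norm_Lm2[OF DT] a_def
        by (intro add_left_mono mult_left_mono) auto
    qed
    have E2: "transpose X' ** X' - mat 1 = ((1 - 2* s) *\<^sub>R D - (2* s) *\<^sub>R (D ** D)) + t^2 *\<^sub>R (transpose Lm ** Lm)"
      unfolding X' E s_def by (simp add: algebra_simps)
    have "norm (transpose X' ** X' - mat 1) \<le> norm ((1 - 2* s) *\<^sub>R D) + norm ((2* s) *\<^sub>R (D ** D)) + norm (t^2 *\<^sub>R (transpose Lm ** Lm))"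
      unfolding E2 by (rule order_trans[OF norm_triangle_ineq] add_mono norm_triangle_ineq4)+ simp
    also have "\<dots> \<le> (1-2* s)*d + (2* s)*d^2 + t^2 * (a^2 + lam^2 * ((1+\<epsilon>) * d^2))"
    proof -
      have c: "0 \<le> 1 - 2* s" using s by auto
      have "norm (transpose Lm ** Lm) \<le> a^2 + lam^2 * ((1+\<epsilon>) * d^2)" using norm_TT[of Lm] nL by linarith
      then show ?thesis using c DD s
        by (simp add: d_def[symmetric]) (intro add_mono mult_left_mono; simp)
    qed
    also have "\<dots> \<le> \<epsilon>"
    proof (cases "d = 0")
      case True
      have "t^2 * a^2 \<le> \<epsilon>" using R2b[OF apos e(1) e(2) lam t(1)] cnd unfolding Pfun_def by blast
      then show ?thesis using True by simp
    next
      case False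
      then have dpos: "d > 0" using d by simp
      have q: "t^2 * (a^2 + lam^2*(1+\<epsilon>)*d^2) - 2*t*(lam*(1-\<epsilon>)*d) \<le> \<epsilon> - d"
        using R2a[OF apos dpos d(2) e(2) lam t(1)] cnd[OF dpos d(2)] unfolding Pfun_def by blast
      have "d * d \<le> \<epsilon> * d" using d by (intro mult_right_mono) auto
      then have "(2* s)*d^2 \<le> (2* s)*(\<epsilon>*d)" using s d by (intro mult_left_mono) (auto simp: power2_eq_square)
      then show ?thesis using q unfolding s_def by (simp add: algebra_simps power2_eq_square)
    qed
    finally show ?thesis .
  qed
  then show ?thesis unfolding Lm_def D_def by blast
qed


lemma lin_fin:
  fixes A2 \<alpha> p q c1 u c2 v m n qo2 k qoo qo1 B1 B2 g \<gamma> z \<beta> asq :: real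
  assumes "A2 \<ge> \<alpha>" "p \<le> q" "c1 \<le> u" "c2 \<le> v + m" "n \<ge> qo2" "n = k - (1/2)*m" "qo2 = qoo - (1/2)*qo1"
    "B1 \<ge> B2" "B1 = qoo - (1/2)*qo1 - (3/2)*q - (1/4)*g" "B2 = (1/2)*\<gamma>" "u + v \<le> 2*z" "2*z \<le> \<beta> + \<gamma>"
    "\<alpha> - (1/2)*asq = (1/2)*\<beta>"
  shows "A2 - (3/2)*p - (1/2)*c1 - (1/2)*c2 + k \<ge> (1/2)*asq + (1/4)*g"
  using assms by linarith

lemma RL:
  fixes a d w A2 \<sigma> c1 c2 s Lp L lam \<mu> \<epsilon> :: real
  assumes e: "0 < \<epsilon>" "\<epsilon> < 3/4" and lam: "0 < lam" and L: "0 < L"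
    and nn: "0 \<le> a" "0 \<le> d" "0 \<le> w" "0 \<le> Lp" "0 \<le> s"
    and hA: "a^2 \<le> (1+\<epsilon>) * A2" and hs: "\<sigma> \<le> s * d^2" and hc1: "c1 \<le> a * Lp * d"
    and hc2: "c2 \<le> L * (a + lam * w) * w"
    and hw1: "(1-\<epsilon>) * d^2 \<le> w^2" and hw2: "w^2 \<le> (1+\<epsilon>) * d^2"
    and mu: "\<mu> \<ge> 2 / (3 - 4*\<epsilon>) * (L * (1-\<epsilon>) + 3 * s + (max L Lp)^2 * (1+\<epsilon>)^2 / (lam * (1-\<epsilon>)))"
  shows "A2 - (3/2) * lam * \<sigma> - (1/2) * c1 - (1/2) * c2 + \<mu> * lam * w^2 \<ge> a^2/2 + lam * \<mu> * d^2 / 4"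
proof -
  define Lh where "Lh = max L Lp"
  define R where "R = Lh^2 * (1+\<epsilon>)^2 / (lam * (1-\<epsilon>))"
  have Lh: "L \<le> Lh" "Lp \<le> Lh" "0 < Lh" using L by (auto simp: Lh_def)
  have p1: "0 < 3 - 4*\<epsilon>" "0 < 1 - \<epsilon>" using e by auto
  have muQ: "\<mu> * (3 - 4*\<epsilon>) \<ge> 2 * (L * (1-\<epsilon>) + 3 * s + R)"
    using mu p1 by (simp add: R_def Lh_def field_simps)
  have Rnn: "0 \<le> R" unfolding R_def using lam p1 by auto
  have mupos: "\<mu> \<ge> L/2"
  proof -
    have "2 * (L * (1-\<epsilon>)) + 2 * (3 * s) + 2 * R \<le> \<mu> * (3 - 4*\<epsilon>)" using muQ by (simp only: distrib_left)
    then have a: "2 * (L * (1-\<epsilon>)) \<le> \<mu> * (3 - 4*\<epsilon>)" using Rnn nn by linarith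
    have b: "(L/2) * (3 - 4*\<epsilon>) \<le> 2 * (L * (1-\<epsilon>))" using L by (simp add: algebra_simps)
    have "(L/2) * (3 - 4*\<epsilon>) \<le> \<mu> * (3 - 4*\<epsilon>)" by (rule order_trans[OF b a])
    then show ?thesis using p1 by (simp add: mult_le_cancel_right_pos)
  qed
  have h1: "A2 \<ge> a^2/(1+\<epsilon>)" using hA e by (simp add: divide_le_eq mult.commute)
  have h2: "lam * \<sigma> \<le> lam * (s * d^2)" using hs lam by (intro mult_left_mono) auto
  have h3: "c1 \<le> Lh * a * d"
  proof -
    have "a * Lp * d \<le> a * Lh * d" using Lh nn by (intro mult_right_mono mult_left_mono) auto
    then show ?thesis using hc1 by (simp add: mult_ac)
  qed
  have h4: "c2 \<le> Lh * a * w + L * (lam * w^2)"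
  proof -
    have "L * a * w \<le> Lh * a * w" using Lh nn by (intro mult_right_mono) auto
    moreover have "L * (a + lam * w) * w = L * a * w + L * (lam * w^2)" by (simp add: algebra_simps power2_eq_square)
    ultimately show ?thesis using hc2 by linarith
  qed
  have h5a: "(\<mu> - L/2) * (lam * w^2) \<ge> (\<mu> - L/2) * (lam * ((1-\<epsilon>) * d^2))"
    using mupos lam hw1 by (intro mult_left_mono) auto
  have h5b: "(\<mu> - L/2) * (lam * w^2) = \<mu> * (lam * w^2) - (1/2) * (L * (lam * w^2))"
    by (simp add: algebra_simps)
  have h5c: "(\<mu> - L/2) * (lam * ((1-\<epsilon>) * d^2)) = \<mu> * (lam * ((1-\<epsilon>) * d^2)) - (1/2) * (L * (lam * ((1-\<epsilon>) * d^2)))"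
    by (simp add: algebra_simps)
  have br0: "(1/4) * (\<mu> * (3 - 4*\<epsilon>)) - (1/2) * (L * (1-\<epsilon>)) - (3/2) * s \<ge> (1/2) * R"
  proof -
    have "2 * (L * (1-\<epsilon>)) + 2 * (3 * s) + 2 * R \<le> \<mu> * (3 - 4*\<epsilon>)" using muQ by (simp only: distrib_left)
    then show ?thesis by linarith
  qed
  have br1: "(\<mu> - L/2) * (1-\<epsilon>) - (3/2) * s - (1/4) * \<mu> = (1/4) * (\<mu> * (3 - 4*\<epsilon>)) - (1/2) * (L * (1-\<epsilon>)) - (3/2) * s"
    by (simp add: algebra_simps)
  have h6a: "lam * (d^2 * ((\<mu> - L/2) * (1-\<epsilon>) - (3/2) * s - (1/4) * \<mu>)) \<ge> lam * (d^2 * ((1/2) * R))"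
    using br0 br1 lam nn by (intro mult_left_mono) auto
  have h6b: "lam * (d^2 * ((\<mu> - L/2) * (1-\<epsilon>) - (3/2) * s - (1/4) * \<mu>))
     = \<mu> * (lam * ((1-\<epsilon>) * d^2)) - (1/2) * (L * (lam * ((1-\<epsilon>) * d^2))) - (3/2) * (lam * (s * d^2)) - (1/4) * (\<mu> * (lam * d^2))"
    by (simp add: field_simps)
  have h6c: "lam * (d^2 * ((1/2) * R)) = (1/2) * (Lh^2 * (1+\<epsilon>)^2 * d^2 / (1-\<epsilon>))"
    unfolding R_def using lam p1 by (simp add: field_simps)
  define r where "r = sqrt (1+\<epsilon>)"
  have r2: "r^2 = 1+\<epsilon>" unfolding r_def using e by simp
  have r1: "1 \<le> r" unfolding r_def using e by simp
  have r: "r^2 = 1+\<epsilon>" "1 \<le> r" using r1 r2 by auto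
  have wr: "w \<le> r * d"
  proof -
    have rd: "(r*d)^2 = (1+\<epsilon>) * d^2" by (simp only: power_mult_distrib r2)
    have "w^2 \<le> (r*d)^2" unfolding rd by (rule hw2)
    moreover have "0 \<le> r*d" using r1 nn by simp
    ultimately show ?thesis by (rule power2_le_imp_le)
  qed
  have h8: "Lh * a * d + Lh * a * w \<le> 2 * (Lh * a * r * d)"
  proof -
    have "1 * d \<le> r * d" using r nn by (intro mult_right_mono) auto
    then have "d + w \<le> 2 * (r * d)" using wr by linarith
    then have "(Lh * a) * (d + w) \<le> (Lh * a) * (2 * (r * d))" using Lh nn by (intro mult_left_mono) auto
    then show ?thesis by (simp add: algebra_simps)
  qed
  have h9: "2 * (Lh * a * r * d) \<le> a^2 * (1-\<epsilon>)/(1+\<epsilon>) + Lh^2 * (1+\<epsilon>)^2 * d^2 / (1-\<epsilon>)"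
  proof -
    have sq: "0 \<le> (a * (1-\<epsilon>) - Lh * (1+\<epsilon>) * r * d)^2" by simp
    have "(a * (1-\<epsilon>) - Lh * (1+\<epsilon>) * r * d)^2
       = a^2 * (1-\<epsilon>)^2 + Lh^2 * (1+\<epsilon>)^2 * r^2 * d^2 - 2 * (1-\<epsilon>) * (1+\<epsilon>) * (Lh * a * r * d)"
      by (simp add: power2_eq_square algebra_simps)
    also have "\<dots> = a^2 * (1-\<epsilon>)^2 + Lh^2 * (1+\<epsilon>)^3 * d^2 - 2 * (1-\<epsilon>) * (1+\<epsilon>) * (Lh * a * r * d)"
      using r by (simp add: power3_eq_cube power2_eq_square)
    finally have "2 * (1-\<epsilon>) * (1+\<epsilon>) * (Lh * a * r * d) \<le> a^2 * (1-\<epsilon>)^2 + Lh^2 * (1+\<epsilon>)^3 * d^2"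
      using sq by linarith
    moreover have "(2 * (Lh * a * r * d)) * ((1-\<epsilon>) * (1+\<epsilon>)) = 2 * (1-\<epsilon>) * (1+\<epsilon>) * (Lh * a * r * d)"
      by (simp only: mult_ac)
    ultimately have "(2 * (Lh * a * r * d)) * ((1-\<epsilon>) * (1+\<epsilon>)) \<le> a^2 * (1-\<epsilon>)^2 + Lh^2 * (1+\<epsilon>)^3 * d^2"
      by linarith
    then have "2 * (Lh * a * r * d) \<le> (a^2 * (1-\<epsilon>)^2 + Lh^2 * (1+\<epsilon>)^3 * d^2) / ((1-\<epsilon>) * (1+\<epsilon>))"
      using p1 e by (subst pos_le_divide_eq) auto
    also have "\<dots> = a^2 * (1-\<epsilon>)/(1+\<epsilon>) + Lh^2 * (1+\<epsilon>)^2 * d^2 / (1-\<epsilon>)"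
      using p1 e by (simp add: field_simps power2_eq_square power3_eq_cube)
    finally show ?thesis .
  qed
  have h10: "a^2/(1+\<epsilon>) - (1/2) * a^2 = (1/2) * (a^2 * (1-\<epsilon>)/(1+\<epsilon>))"
    using e by (simp add: field_simps)
  have fin: "A2 - (3/2) * (lam * \<sigma>) - (1/2) * c1 - (1/2) * c2 + \<mu> * (lam * w^2) \<ge> (1/2) * a^2 + (1/4) * (\<mu> * (lam * d^2))"
    by (rule lin_fin[OF h1 h2 h3 h4 h5a h5b h5c h6a h6b h6c h8 h9 h10])
  then show ?thesis by (simp add: algebra_simps)
qed


lemma has_derivative_mm [derivative_intros]:
  fixes f :: "_ \<Rightarrow> real^'k^'m" and g :: "_ \<Rightarrow> real^'n^'k"
  assumes "(f has_derivative f') (at x within s)" "(g has_derivative g') (at x within s)"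
  shows "((\<lambda>x. f x ** g x) has_derivative (\<lambda>h. f x ** g' h + f' h ** g x)) (at x within s)"
  using bounded_bilinear.FDERIV[OF bb_mm assms] by simp

lemma has_derivative_transpose [derivative_intros]:
  "(f has_derivative f') F \<Longrightarrow> ((\<lambda>x. transpose (f x :: real^'b^'a)) has_derivative (\<lambda>h. transpose (f' h))) F"
  by (rule bounded_linear.has_derivative[OF bl_transpose])

lemma bl_msym: "bounded_linear (msym :: real^'a^'a \<Rightarrow> real^'a^'a)"
  unfolding msym_def
  by (intro bounded_linear_intros bl_transpose[THEN bounded_linear_compose] bounded_linear_ident)

lemma has_derivative_msym [derivative_intros]:
  "(f has_derivative f') F \<Longrightarrow> ((\<lambda>x. msym (f x :: real^'a^'a)) has_derivative (\<lambda>h. msym (f' h))) F"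
  by (rule bounded_linear.has_derivative[OF bl_msym])

lemma merit_deriv:
  fixes f :: "real^'p^'n \<Rightarrow> real" and G :: "real^'p^'n \<Rightarrow> real^'p^'n"
  assumes fg: "(f has_derivative (\<lambda>H. G X \<bullet> H)) (at X)" and Gd: "(G has_derivative DGX) (at X)"
  shows "(merit f G \<mu> has_derivative (\<lambda>H. G X \<bullet> H
      - (1/2) * (msym (transpose H ** G X + transpose X ** DGX H) \<bullet> (transpose X ** X - mat 1)
                 + msym (transpose X ** G X) \<bullet> (transpose H ** X + transpose X ** H))
      + \<mu> * ((1/2) * ((transpose X ** X - mat 1) \<bullet> (transpose H ** X + transpose X ** H))))) (at X)"
proof -
  have eq: "merit f G \<mu> = (\<lambda>Y. f Y - (1/2) * (msym (transpose Y ** G Y) \<bullet> (transpose Y ** Y - mat 1))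
      + \<mu> * ((1/4) * ((transpose Y ** Y - mat 1) \<bullet> (transpose Y ** Y - mat 1))))"
    by (simp add: fun_eq_iff merit_def Ncons_def power2_norm_eq_inner)
  show ?thesis unfolding eq
    apply (rule has_derivative_eq_rhs)
     apply (rule has_derivative_add has_derivative_diff has_derivative_mult has_derivative_inner
        has_derivative_mm has_derivative_transpose has_derivative_msym has_derivative_const
        has_derivative_ident fg Gd)+
    apply (simp add: fun_eq_iff inner_add_left inner_add_right inner_commute algebra_simps)
    done
qed


lemma key_ineq:
  fixes X :: "real^'p^'n" and G :: "real^'p^'n \<Rightarrow> real^'p^'n" and f :: "real^'p^'n \<Rightarrow> real"
  assumes nD: "norm (transpose X ** X - mat 1) \<le> \<epsilon>" and e: "0 < \<epsilon>" "\<epsilon> < 3/4" and lam: "0 < lam" and L: "0 < L"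
    and Gb: "norm (G X) \<le> Lp" and Sb: "norm (msym (transpose X ** G X)) \<le> s"
    and DGb: "norm (DGX (Lambda_field G lam X)) \<le> L * norm (Lambda_field G lam X)"
    and mu: "\<mu> \<ge> 2 / (3 - 4*\<epsilon>) * (L * (1-\<epsilon>) + 3 * s + (max L Lp)^2 * (1+\<epsilon>)^2 / (lam * (1-\<epsilon>)))"
    and fg: "(f has_derivative (\<lambda>H. G X \<bullet> H)) (at X)" and Gd: "(G has_derivative DGX) (at X)"
    and GLd: "(merit f G \<mu> has_derivative (\<lambda>H. GLX \<bullet> H)) (at X)"
  shows "GLX \<bullet> Lambda_field G lam X \<ge> (1/2) * (norm (rgrad G X))^2 + lam * \<mu> * Ncons X"
proof -
  define D where "D = transpose X ** X - mat 1"
  define S where "S = msym (transpose X ** G X)"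
  define A where "A = mskew (G X ** transpose X)"
  define \<psi> where "\<psi> = A ** X"
  define Lm where "Lm = \<psi> + lam *\<^sub>R (X ** D)"
  define V where "V = DGX Lm"
  have XX: "transpose X ** X = D + mat 1" by (simp add: D_def)
  have DT: "transpose D = D" unfolding D_def by (rule D_T)
  have DDT: "transpose (D ** D) = D ** D" by (simp add: matrix_transpose_mul DT)
  have LmE: "Lambda_field G lam X = Lm" "rgrad G X = \<psi>"
    by (simp_all add: Lambda_field_def rgrad_def Lm_def \<psi>_def A_def D_def)
  have "(\<lambda>H. GLX \<bullet> H) = (\<lambda>H. G X \<bullet> H
      - (1/2) * (msym (transpose H ** G X + transpose X ** DGX H) \<bullet> (transpose X ** X - mat 1)
                 + msym (transpose X ** G X) \<bullet> (transpose H ** X + transpose X ** H))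
      + \<mu> * ((1/2) * ((transpose X ** X - mat 1) \<bullet> (transpose H ** X + transpose X ** H))))"
    by (rule has_derivative_unique[OF GLd merit_deriv[OF fg Gd]])
  then have Dm: "GLX \<bullet> Lm = G X \<bullet> Lm
      - (1/2) * (msym (transpose Lm ** G X + transpose X ** V) \<bullet> D
                 + S \<bullet> (transpose Lm ** X + transpose X ** Lm))
      + \<mu> * ((1/2) * (D \<bullet> (transpose Lm ** X + transpose X ** Lm)))"
    unfolding D_def S_def V_def by meson
  have p1: "G X \<bullet> \<psi> = (norm A)^2"
  proof -
    have "G X \<bullet> \<psi> = inner A (G X ** transpose X)" unfolding \<psi>_def by (subst inner_commute) (rule inner_mm_right)
    also have "\<dots> = inner A (msym (G X ** transpose X) + A)" unfolding A_def by (simp add: msym_mskew)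
    also have "\<dots> = inner (msym (G X ** transpose X)) A + inner A A" by (simp add: inner_add_right inner_commute)
    also have "inner (msym (G X ** transpose X)) A = 0" unfolding A_def by (rule inner_sym_skew) (simp_all add: msym_T mskew_T)
    finally show ?thesis by (simp add: power2_norm_eq_inner)
  qed
  have p2: "G X \<bullet> (X ** D) = S \<bullet> D"
  proof -
    have "G X \<bullet> (X ** D) = inner D (transpose X ** G X)" by (subst inner_commute) (rule inner_mm_left)
    also have "\<dots> = S \<bullet> D" unfolding S_def using inner_msym[OF DT, of "transpose X ** G X"] by (simp add: inner_commute)
    finally show ?thesis .
  qed
  define c1 where "c1 = \<psi> \<bullet> (G X ** D)"
  define c2 where "c2 = V \<bullet> (X ** D)"
  define \<sigma> where "\<sigma> = S \<bullet> (D ** D)"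
  have p3: "msym (transpose Lm ** G X + transpose X ** V) \<bullet> D = c1 + lam * \<sigma> + c2"
  proof -
    have a1: "inner (transpose X ** V) D = c2" unfolding c2_def using inner_mm_left[of "transpose X" V D] by simp
    have a2: "inner (transpose Lm ** G X) D = inner (G X) (Lm ** D)" using inner_mm_left[of "transpose Lm" "G X" D] by simp
    have a3: "Lm ** D = \<psi> ** D + lam *\<^sub>R (X ** (D ** D))" unfolding Lm_def by (simp add: mm_add_right mm_scale_left matrix_mul_assoc)
    have a4: "inner (G X) (\<psi> ** D) = c1" unfolding c1_def using inner_mm_right[of \<psi> D "G X"] by (simp add: inner_commute DT)
    have a5: "inner (G X) (X ** (D ** D)) = \<sigma>"
    proof -
      have "inner (G X) (X ** (D ** D)) = inner (D ** D) (transpose X ** G X)" by (subst inner_commute) (rule inner_mm_left)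
      also have "\<dots> = \<sigma>" unfolding \<sigma>_def S_def using inner_msym[OF DDT, of "transpose X ** G X"] by (simp add: inner_commute)
      finally show ?thesis .
    qed
    show ?thesis using a1 a2 a3 a4 a5 inner_msym[OF DT, of "transpose Lm ** G X + transpose X ** V"]
      by (simp add: inner_add_left inner_add_right)
  qed
  have p4: "transpose Lm ** X + transpose X ** Lm = (2*lam) *\<^sub>R (D + D ** D)"
    using E_main[OF XX DT, of "G X ** transpose X" lam] unfolding Lm_def \<psi>_def A_def by (simp add: add.commute)
  have p5: "S \<bullet> ((2*lam) *\<^sub>R (D + D ** D)) = 2*lam*(S \<bullet> D) + 2*lam*\<sigma>"
    unfolding \<sigma>_def by (simp add: inner_add_right algebra_simps)
  have p6: "D \<bullet> ((2*lam) *\<^sub>R (D + D ** D)) = 2*lam*(norm (X ** D))^2"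
    using norm_XD2[OF XX DT] by (simp add: inner_add_right algebra_simps power2_norm_eq_inner)
  have p7: "G X \<bullet> Lm = (norm A)^2 + lam * (S \<bullet> D)"
    unfolding Lm_def using p1 p2 by (simp add: inner_add_right)
  have main: "GLX \<bullet> Lm = (norm A)^2 - (3/2) * lam * \<sigma> - (1/2) * c1 - (1/2) * c2 + \<mu> * lam * (norm (X ** D))^2"
    unfolding Dm p3 p4 p5 p6 p7 by (simp add: algebra_simps)
  define a where "a = norm \<psi>"
  define d where "d = norm D"
  define w where "w = norm (X ** D)"
  have d: "0 \<le> d" "d \<le> \<epsilon>" using nD by (auto simp: d_def D_def)
  have hA: "a^2 \<le> (1+\<epsilon>) * (norm A)^2"
  proof -
    have "a^2 \<le> (1 + d) * (norm A)^2" unfolding a_def d_def \<psi>_def by (rule norm_MX[OF XX])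
    also have "\<dots> \<le> (1+\<epsilon>) * (norm A)^2" using d by (intro mult_right_mono) auto
    finally show ?thesis .
  qed
  have DD: "norm (D ** D) \<le> d^2" using norm_mm_le[of D D] by (simp add: d_def power2_eq_square)
  have Lp0: "0 \<le> Lp" using Gb norm_ge_zero order_trans by blast
  have s0: "0 \<le> s" using Sb norm_ge_zero order_trans by blast
  have hs: "\<sigma> \<le> s * d^2"
  proof -
    have "\<sigma> \<le> norm S * norm (D ** D)" unfolding \<sigma>_def by (rule Cauchy_Schwarz_ineq2[THEN abs_le_D1])
    also have "\<dots> \<le> s * d^2" using Sb DD s0 unfolding S_def by (intro mult_mono) auto
    finally show ?thesis .
  qed
  have hc1: "c1 \<le> a * Lp * d"
  proof -
    have "c1 \<le> a * norm (G X ** D)" unfolding c1_def a_def by (rule Cauchy_Schwarz_ineq2[THEN abs_le_D1])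
    also have "\<dots> \<le> a * (Lp * d)"
    proof -
      have "norm (G X ** D) \<le> norm (G X) * d" unfolding d_def by (rule norm_mm_le)
      also have "\<dots> \<le> Lp * d" using Gb d by (intro mult_right_mono) auto
      finally show ?thesis unfolding a_def by (intro mult_left_mono) auto
    qed
    finally show ?thesis by (simp add: mult_ac)
  qed
  have nLm: "norm Lm \<le> a + lam * w"
    unfolding Lm_def a_def w_def using norm_triangle_ineq[of \<psi> "lam *\<^sub>R (X ** D)"] lam by simp
  have hc2: "c2 \<le> L * (a + lam * w) * w"
  proof -
    have "c2 \<le> norm V * w" unfolding c2_def w_def by (rule Cauchy_Schwarz_ineq2[THEN abs_le_D1])
    also have "\<dots> \<le> (L * (a + lam * w)) * w"
    proof -
      have "norm V \<le> L * norm Lm" using DGb LmE unfolding V_def by simp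
      also have "\<dots> \<le> L * (a + lam * w)" using nLm L by (intro mult_left_mono) auto
      finally show ?thesis unfolding w_def by (intro mult_right_mono) auto
    qed
    finally show ?thesis .
  qed
  have hw1: "(1-\<epsilon>) * d^2 \<le> w^2"
  proof -
    have "(1-\<epsilon>) * d^2 \<le> (1 - d) * d^2" using d by (intro mult_right_mono) auto
    also have "\<dots> \<le> w^2" unfolding w_def d_def by (rule norm_XD_bounds(1)[OF XX DT])
    finally show ?thesis .
  qed
  have hw2: "w^2 \<le> (1+\<epsilon>) * d^2"
  proof -
    have "w^2 \<le> (1 + d) * d^2" unfolding w_def d_def by (rule norm_XD_bounds(2)[OF XX DT])
    also have "\<dots> \<le> (1+\<epsilon>) * d^2" using d by (intro mult_right_mono) auto
    finally show ?thesis .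
  qed
  have R: "(norm A)^2 - (3/2) * lam * \<sigma> - (1/2) * c1 - (1/2) * c2 + \<mu> * lam * w^2 \<ge> a^2/2 + lam * \<mu> * d^2 / 4"
    by (rule RL[OF e lam L _ _ _ Lp0 s0 hA hs hc1 hc2 hw1 hw2 mu]) (auto simp: a_def d_def w_def)
  have N: "Ncons X = d^2 / 4" by (simp add: Ncons_def d_def D_def)
  show ?thesis using R main unfolding LmE N w_def a_def by (simp add: algebra_simps)
qed


lemma deriv_bound:
  fixes G :: "'a::real_normed_vector \<Rightarrow> 'b::real_normed_vector"
  assumes Gd: "(G has_derivative DGX) (at X)" and eta: "0 < \<eta>"
    and seg: "\<And>t. 0 \<le> t \<Longrightarrow> t \<le> \<eta> \<Longrightarrow> norm (G (X - t *\<^sub>R Lm) - G X) \<le> L * norm (t *\<^sub>R Lm)"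
  shows "norm (DGX Lm) \<le> L * norm Lm"
proof -
  have bl: "bounded_linear DGX" using Gd by (rule has_derivative_bounded_linear)
  have neg: "DGX (- v) = - DGX v" for v using linear_scale[OF bounded_linear.linear[OF bl], of "-1" v] by simp
  define \<phi> where "\<phi> t = G (X - t *\<^sub>R Lm)" for t :: real
  have lin: "((\<lambda>t::real. X - t *\<^sub>R Lm) has_derivative (\<lambda>t. - (t *\<^sub>R Lm))) (at 0 within {0<..})"
    by (rule has_derivative_eq_rhs, (rule derivative_intros)+) auto
  have Gd0: "(G has_derivative DGX) (at (X - 0 *\<^sub>R Lm))" using Gd by simp
  have "(\<phi> has_derivative (\<lambda>t. DGX (- (t *\<^sub>R Lm)))) (at 0 within {0<..})"
    unfolding \<phi>_def by (rule has_derivative_compose[OF lin Gd0])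
  then have lim0: "((\<lambda>t. ((\<phi> t - \<phi> 0) - DGX (- ((t - 0) *\<^sub>R Lm))) /\<^sub>R norm (t - 0)) \<longlongrightarrow> 0) (at 0 within {0<..})"
    by (simp add: has_derivative_at_within)
  have "((\<lambda>t. ((\<phi> t - \<phi> 0) - DGX (- ((t - 0) *\<^sub>R Lm))) /\<^sub>R norm (t - 0) - DGX Lm) \<longlongrightarrow> 0 - DGX Lm) (at 0 within {0<..})"
    by (intro tendsto_diff lim0 tendsto_const)
  moreover have "eventually (\<lambda>t. ((\<phi> t - \<phi> 0) - DGX (- ((t - 0) *\<^sub>R Lm))) /\<^sub>R norm (t - 0) - DGX Lm = (\<phi> t - \<phi> 0) /\<^sub>R t) (at 0 within {0<..})"
  proof -
    have "eventually (\<lambda>t::real. t > 0) (at 0 within {0<..})" by (simp add: eventually_at_filter)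
    then show ?thesis
    proof (rule eventually_mono)
      fix t :: real assume "t > 0"
      then show "((\<phi> t - \<phi> 0) - DGX (- ((t - 0) *\<^sub>R Lm))) /\<^sub>R norm (t - 0) - DGX Lm = (\<phi> t - \<phi> 0) /\<^sub>R t"
        by (simp add: neg linear_scale[OF bounded_linear.linear[OF bl]] scaleR_add_right)
    qed
  qed
  ultimately have lim: "((\<lambda>t. (\<phi> t - \<phi> 0) /\<^sub>R t) \<longlongrightarrow> - DGX Lm) (at 0 within {0<..})"
    by (simp add: tendsto_cong)
  have ev: "eventually (\<lambda>t. norm ((\<phi> t - \<phi> 0) /\<^sub>R t) \<le> L * norm Lm) (at 0 within {0<..})"
  proof -
    have "eventually (\<lambda>t::real. t < \<eta>) (at 0 within {0<..})"
      unfolding eventually_at using eta by (intro exI[of _ \<eta>]) (auto simp: dist_real_def)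
    moreover have "eventually (\<lambda>t::real. t > 0) (at 0 within {0<..})" by (simp add: eventually_at_filter)
    ultimately show ?thesis
    proof eventually_elim
      case (elim t)
      then have "norm (\<phi> t - \<phi> 0) \<le> L * (t * norm Lm)" using seg[of t] by (simp add: \<phi>_def)
      then have "norm (\<phi> t - \<phi> 0) / t \<le> L * norm Lm" using elim by (simp add: divide_le_eq mult_ac)
      then show ?case using elim by (simp add: divide_inverse mult.commute)
    qed
  qed
  have "norm (- DGX Lm) \<le> L * norm Lm"
    by (rule Lim_norm_ubound[OF _ lim ev]) (use trivial_limit_at_right_real in simp)
  then show ?thesis by simp
qed

lemma descent:
  fixes M :: "'a::real_inner \<Rightarrow> real"
  assumes GLd: "\<And>Y. (M has_derivative (\<lambda>H. GL Y \<bullet> H)) (at Y)" and eta: "0 \<le> \<eta>"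
    and seg: "\<And>t. 0 \<le> t \<Longrightarrow> t \<le> \<eta> \<Longrightarrow> norm (GL X - GL (X - t *\<^sub>R Lm)) \<le> Lg * norm (t *\<^sub>R Lm)"
  shows "M (X - \<eta> *\<^sub>R Lm) \<le> M X - \<eta> * (GL X \<bullet> Lm) + Lg / 2 * \<eta>^2 * (norm Lm)^2"
proof -
  define h where "h t = M (X - t *\<^sub>R Lm) + t * (GL X \<bullet> Lm) - Lg / 2 * t^2 * (norm Lm)^2" for t
  have hd: "DERIV h t :> (- (GL (X - t *\<^sub>R Lm) \<bullet> Lm) + GL X \<bullet> Lm - Lg * t * (norm Lm)^2)" for t
  proof -
    have lin: "((\<lambda>s::real. X - s *\<^sub>R Lm) has_derivative (\<lambda>s. - (s *\<^sub>R Lm))) (at t)"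
      by (rule has_derivative_eq_rhs, (rule derivative_intros)+) auto
    have "((\<lambda>s. M (X - s *\<^sub>R Lm)) has_derivative (\<lambda>s. GL (X - t *\<^sub>R Lm) \<bullet> (- (s *\<^sub>R Lm)))) (at t)"
      by (rule has_derivative_compose[OF lin GLd])
    then have d1: "((\<lambda>s. M (X - s *\<^sub>R Lm)) has_real_derivative (- (GL (X - t *\<^sub>R Lm) \<bullet> Lm))) (at t)"
      unfolding has_field_derivative_def
      by (rule has_derivative_eq_rhs) (simp add: fun_eq_iff inner_minus_right)
    have d2: "((\<lambda>s. s * (GL X \<bullet> Lm)) has_real_derivative (GL X \<bullet> Lm)) (at t)"
      by (rule derivative_eq_intros refl | simp)+
    have d3: "((\<lambda>s. Lg / 2 * s^2 * (norm Lm)^2) has_real_derivative (Lg * t * (norm Lm)^2)) (at t)"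
      by (rule derivative_eq_intros refl | simp)+
    show ?thesis unfolding h_def by (rule DERIV_diff[OF DERIV_add[OF d1 d2] d3])

  qed
  have "h \<eta> \<le> h 0"
  proof (rule DERIV_nonpos_imp_nonincreasing[OF eta])
    fix t assume t: "0 \<le> t" "t \<le> \<eta>"
    have "(GL X - GL (X - t *\<^sub>R Lm)) \<bullet> Lm \<le> norm (GL X - GL (X - t *\<^sub>R Lm)) * norm Lm"
      by (rule Cauchy_Schwarz_ineq2[THEN abs_le_D1])
    also have "\<dots> \<le> (Lg * norm (t *\<^sub>R Lm)) * norm Lm" by (intro mult_right_mono seg t) auto
    also have "\<dots> = Lg * t * (norm Lm)^2" using t by (simp add: power2_eq_square)
    finally have "- (GL (X - t *\<^sub>R Lm) \<bullet> Lm) + GL X \<bullet> Lm - Lg * t * (norm Lm)^2 \<le> 0"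
      by (simp add: inner_diff_left)
    then show "\<exists>y. DERIV h t :> y \<and> y \<le> 0" using hd by blast
  qed
  then show ?thesis unfolding h_def by simp
qed


lemma deriv_cont:
  assumes "\<And>x. (F has_derivative F' x) (at x)"
  shows "continuous_on S F"
  using assms by (intro continuous_at_imp_continuous_on ballI has_derivative_continuous) blast

lemma cont_D: "continuous_on S (\<lambda>X::real^'p^'n. transpose X ** X - mat 1)"
proof (rule deriv_cont)
  fix X :: "real^'p^'n"
  show "((\<lambda>X. transpose X ** X - mat 1) has_derivative (\<lambda>H. transpose X ** H + transpose H ** X)) (at X)"
    by (rule has_derivative_eq_rhs, (rule has_derivative_diff has_derivative_mm has_derivative_transpose
        has_derivative_ident has_derivative_const)+) (simp add: fun_eq_iff)
qed

lemma closed_StEps: "closed (StEps \<epsilon> :: (real^'p^'n) set)"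
  unfolding StEps_def
  by (rule closed_Collect_le) (intro continuous_on_norm cont_D, simp)

lemma bounded_StEps: "bounded (StEps \<epsilon> :: (real^'p^'n) set)"
proof -
  define C where "C = max 1 (norm (mat 1 :: real^'p^'p) * (norm (mat 1 :: real^'p^'p) + \<bar>\<epsilon>\<bar>))"
  have "norm X \<le> C" if "X \<in> StEps \<epsilon>" for X :: "real^'p^'n"
  proof -
    have nD: "norm (transpose X ** X - mat 1) \<le> \<epsilon>" using that by (simp add: StEps_def)
    have "(norm X)^2 = inner (X ** mat 1) X" by (simp add: power2_norm_eq_inner)
    also have "\<dots> = inner (mat 1) (transpose X ** X)" by (rule inner_mm_left)
    also have "\<dots> \<le> norm (mat 1 :: real^'p^'p) * norm (transpose X ** X)" by (rule Cauchy_Schwarz_ineq2[THEN abs_le_D1])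
    also have "\<dots> \<le> norm (mat 1 :: real^'p^'p) * (norm (mat 1 :: real^'p^'p) + \<bar>\<epsilon>\<bar>)"
    proof -
      have "norm (transpose X ** X) \<le> norm (transpose X ** X - mat 1) + norm (mat 1 :: real^'p^'p)"
        using norm_triangle_ineq[of "transpose X ** X - mat 1" "mat 1"] by simp
      then show ?thesis using nD by (intro mult_left_mono) auto
    qed
    finally have sq: "(norm X)^2 \<le> C" unfolding C_def by linarith
    show ?thesis
    proof (cases "norm X \<le> 1")
      case True then show ?thesis unfolding C_def by linarith
    next
      case False
      then have "1 * norm X \<le> norm X * norm X" by (intro mult_right_mono) auto
      then have "norm X \<le> (norm X)^2" by (simp add: power2_eq_square)
      then show ?thesis using sq by linarith
    qed
  qed
  then show ?thesis unfolding bounded_iff by blast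
qed

lemma compact_StEps: "compact (StEps \<epsilon> :: (real^'p^'n) set)"
  by (simp add: compact_eq_bounded_closed closed_StEps bounded_StEps)

lemma bdd_norm_image:
  assumes "continuous_on (StEps \<epsilon>) F"
  shows "bdd_above ((\<lambda>Y. norm (F Y :: 'b::real_normed_vector)) ` (StEps \<epsilon> :: (real^'p^'n) set))"
proof -
  have "compact ((\<lambda>Y. norm (F Y)) ` (StEps \<epsilon> :: (real^'p^'n) set))"
    by (intro compact_continuous_image continuous_on_norm assms compact_StEps)
  then show ?thesis by (intro bounded_imp_bdd_above compact_imp_bounded)
qed


lemma bl_mskew: "bounded_linear (mskew :: real^'a^'a \<Rightarrow> real^'a^'a)"
  unfolding mskew_def
  by (intro bounded_linear_intros bl_transpose[THEN bounded_linear_compose] bounded_linear_ident)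

lemma cont_mm:
  fixes f :: "_ \<Rightarrow> real^'k^'m" and g :: "_ \<Rightarrow> real^'n^'k"
  shows "continuous_on S f \<Longrightarrow> continuous_on S g \<Longrightarrow> continuous_on S (\<lambda>x. f x ** g x)"
  using bounded_bilinear.continuous_on[OF bb_mm] by blast

lemma eta_star_le: "0 < lam \<Longrightarrow> eta_star atl \<epsilon> lam \<le> 1 / (2 * lam)"
  unfolding eta_star_def by auto

theorem proposition9:
  fixes f :: "real^'p^'n \<Rightarrow> real"
    and G :: "real^'p^'n \<Rightarrow> real^'p^'n"
    and DG :: "real^'p^'n \<Rightarrow> ((real^'p^'n) \<Rightarrow>\<^sub>L (real^'p^'n))"
    and GL :: "real^'p^'n \<Rightarrow> real^'p^'n"
    and X :: "nat \<Rightarrow> real^'p^'n"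
    and lam \<epsilon> L \<mu> Lg Lstar \<eta> :: real
    and K :: nat
  assumes np: "CARD('p) \<le> CARD('n)"
    and lam: "lam > 0"
    and eps: "0 < \<epsilon>" "\<epsilon> < 3/4"
    and f_grad: "\<And>Y. (f has_derivative (\<lambda>H. G Y \<bullet> H)) (at Y)"
    and G_deriv: "\<And>Y. (G has_derivative blinfun_apply (DG Y)) (at Y)"
    and DG_cont: "continuous_on UNIV DG"
    and L_pos: "L > 0"
    and L_lip: "\<And>Y Z. Y \<in> StEps \<epsilon> \<Longrightarrow> Z \<in> StEps \<epsilon> \<Longrightarrow> norm (G Y - G Z) \<le> L * norm (Y - Z)"
    and mu: "\<mu> \<ge> 2 / (3 - 4 * \<epsilon>) *
               (L * (1 - \<epsilon>) + 3 * (SUP Y\<in>StEps \<epsilon>. norm (msym (transpose Y ** G Y)))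
                + (max L (SUP Y\<in>StEps \<epsilon>. norm (G Y)))^2 * (1 + \<epsilon>)^2 / (lam * (1 - \<epsilon>)))"
    and GL_grad: "\<And>Y. (merit f G \<mu> has_derivative (\<lambda>H. GL Y \<bullet> H)) (at Y)"
    and Lg_pos: "Lg > 0"
    and Lg_lip: "\<And>Y Z. Y \<in> StEps \<epsilon> \<Longrightarrow> Z \<in> StEps \<epsilon> \<Longrightarrow> norm (GL Y - GL Z) \<le> Lg * norm (Y - Z)"
    and Lstar: "\<And>Y. Y \<in> StEps \<epsilon> \<Longrightarrow> Lstar \<le> merit f G \<mu> Y"
    and X0: "X 0 \<in> StEps \<epsilon>"
    and iter: "\<And>k. X (Suc k) = X k - \<eta> *\<^sub>R Lambda_field G lam (X k)"
    and eta_pos: "\<eta> > 0"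
    and eta_le: "\<eta> \<le> min (1 / (2 * Lg))
                  (min ((lam * \<mu>) / (4 * lam^2 * Lg * (1 + \<epsilon>)))
                       (eta_star (SUP Y\<in>StEps \<epsilon>. norm (rgrad G Y)) \<epsilon> lam))"
    and K: "K \<ge> 1"
  shows "(1 / real K) * (\<Sum>k=1..K. (norm (rgrad G (X k)))^2)
           \<le> 4 * (merit f G \<mu> (X 0) - Lstar) / (\<eta> * real K)
         \<and> (1 / real K) * (\<Sum>k=1..K. Ncons (X k))
           \<le> 2 * (merit f G \<mu> (X 0) - Lstar) / (\<eta> * (lam * \<mu>) * real K)"
proof -
  let ?S = "StEps \<epsilon> :: (real^'p^'n) set"
  define Lp where "Lp = (SUP Y\<in>?S. norm (G Y))"
  define sS where "sS = (SUP Y\<in>?S. norm (msym (transpose Y ** G Y)))"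
  define atl where "atl = (SUP Y\<in>?S. norm (rgrad G Y))"
  define \<Lambda> where "\<Lambda> Y = Lambda_field G lam Y" for Y
  define M where "M Y = merit f G \<mu> Y" for Y
  have e1: "\<epsilon> < 1" using eps by simp
  have contG: "continuous_on UNIV G" by (rule deriv_cont[OF G_deriv])
  have contS: "continuous_on ?S (\<lambda>Y. msym (transpose Y ** G Y))"
    by (intro bounded_linear.continuous_on[OF bl_msym] cont_mm bounded_linear.continuous_on[OF bl_transpose]
        continuous_on_id continuous_on_subset[OF contG]) auto
  have contR: "continuous_on ?S (rgrad G)"
    unfolding rgrad_def
    by (intro bounded_linear.continuous_on[OF bl_mskew] cont_mm bounded_linear.continuous_on[OF bl_transpose]
        continuous_on_id continuous_on_subset[OF contG]) auto
  have Gb: "norm (G Y) \<le> Lp" if "Y \<in> ?S" for Y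
    unfolding Lp_def by (rule cSUP_upper[OF that bdd_norm_image]) (rule continuous_on_subset[OF contG], simp)
  have Sb: "norm (msym (transpose Y ** G Y)) \<le> sS" if "Y \<in> ?S" for Y
    unfolding sS_def by (rule cSUP_upper[OF that bdd_norm_image[OF contS]])
  have Rb: "norm (rgrad G Y) \<le> atl" if "Y \<in> ?S" for Y
    unfolding atl_def by (rule cSUP_upper[OF that bdd_norm_image[OF contR]])
  have mu': "\<mu> \<ge> 2 / (3 - 4*\<epsilon>) * (L * (1-\<epsilon>) + 3 * sS + (max L Lp)^2 * (1+\<epsilon>)^2 / (lam * (1-\<epsilon>)))"
    using mu unfolding Lp_def sS_def by simp
  have sS0: "0 \<le> sS" using Sb[OF X0] norm_ge_zero order_trans by blast
  have mupos: "0 < \<mu>"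
  proof -
    have "0 < L * (1-\<epsilon>)" using L_pos eps by simp
    moreover have "0 \<le> (max L Lp)^2 * (1+\<epsilon>)^2 / (lam * (1-\<epsilon>))" using lam eps by simp
    ultimately have "0 < L * (1-\<epsilon>) + 3 * sS + (max L Lp)^2 * (1+\<epsilon>)^2 / (lam * (1-\<epsilon>))" using sS0 by linarith
    moreover have "0 < 2 / (3 - 4*\<epsilon>)" using eps by simp
    ultimately show ?thesis using mu' by (meson mult_pos_pos order_less_le_trans)
  qed
  have eta_ls: "\<eta> \<le> eta_star atl \<epsilon> lam" using eta_le unfolding atl_def by simp
  have eta_half: "\<eta> * lam \<le> 1/2"
  proof -
    have "\<eta> \<le> 1 / (2 * lam)" using eta_ls eta_star_le[OF lam, of atl \<epsilon>] by linarith
    then show ?thesis using lam by (simp add: field_simps)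
  qed
  have eta1: "\<eta> \<le> 1 / (2 * Lg)" using eta_le by simp
  have eta2: "\<eta> \<le> (lam * \<mu>) / (4 * lam^2 * Lg * (1 + \<epsilon>))" using eta_le by simp
  have step: "Y - t *\<^sub>R \<Lambda> Y \<in> ?S" if Y: "Y \<in> ?S" and t: "0 \<le> t" "t \<le> \<eta>" for Y t
  proof -
    have nD: "norm (transpose Y ** Y - mat 1) \<le> \<epsilon>" using Y by (simp add: StEps_def)
    have tl: "t * lam \<le> 1/2" using t eta_half lam by (meson mult_right_mono order_trans less_imp_le)
    have cond: "\<forall>d. 0 < d \<and> d \<le> \<epsilon> \<longrightarrow> t \<le> Pfun lam \<epsilon> (norm (mskew (G Y ** transpose Y) ** Y)) d"
      if apos: "norm (mskew (G Y ** transpose Y) ** Y) > 0"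
    proof (intro allI impI)
      fix d assume d: "0 < d \<and> d \<le> \<epsilon>"
      define a where "a = norm (mskew (G Y ** transpose Y) ** Y)"
      have aat: "a \<le> atl" using Rb[OF Y] unfolding a_def rgrad_def .
      have apos': "0 < a" using apos by (simp add: a_def)
      then have atpos: "0 < atl" using aat by linarith
      define Q where "Q = {(lam * (1 - \<epsilon>) * d + a * sqrt ((\<epsilon> - d) / 2)) / (a^2 + lam^2 * (1 + \<epsilon>) * d^2)
                 | a d. 0 < a \<and> a \<le> atl \<and> 0 < d \<and> d \<le> \<epsilon>}"
      have es: "eta_star atl \<epsilon> lam = min (Inf Q) (1 / (2 * lam))"
        unfolding eta_star_def Q_def using atpos by simp
      have mem: "Pfun lam \<epsilon> a d \<in> Q" unfolding Q_def Pfun_def using apos' aat d by blast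
      have bdd: "bdd_below Q"
      proof (rule bdd_belowI)
        fix x assume "x \<in> Q"
        then obtain a' d' where x: "x = (lam * (1 - \<epsilon>) * d' + a' * sqrt ((\<epsilon> - d') / 2)) / (a'^2 + lam^2 * (1 + \<epsilon>) * d'^2)"
          and ad: "0 < a'" "0 < d'" "d' \<le> \<epsilon>" unfolding Q_def by blast
        have "0 \<le> lam * (1 - \<epsilon>) * d' + a' * sqrt ((\<epsilon> - d') / 2)" using ad lam e1 by simp
        moreover have "0 < a'^2 + lam^2 * (1 + \<epsilon>) * d'^2" using ad eps by (intro add_pos_nonneg) auto
        ultimately show "0 \<le> x" unfolding x by simp
      qed
      have "t \<le> \<eta>" using t by simp
      also have "\<eta> \<le> Inf Q" using eta_ls es by simp
      also have "Inf Q \<le> Pfun lam \<epsilon> a d" by (rule cInf_lower2[OF mem order.refl bdd])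
      finally show "t \<le> Pfun lam \<epsilon> (norm (mskew (G Y ** transpose Y) ** Y)) d" by (simp add: a_def)
    qed
    have "norm (transpose (Y - t *\<^sub>R (mskew (G Y ** transpose Y) ** Y + lam *\<^sub>R (Y ** (transpose Y ** Y - mat 1))))
               ** (Y - t *\<^sub>R (mskew (G Y ** transpose Y) ** Y + lam *\<^sub>R (Y ** (transpose Y ** Y - mat 1)))) - mat 1) \<le> \<epsilon>"
      by (rule safeguard[OF nD eps(1) e1 lam t(1) tl cond])
    then show ?thesis by (simp add: StEps_def \<Lambda>_def Lambda_field_def rgrad_def)
  qed
  have desc: "M (Y - \<eta> *\<^sub>R \<Lambda> Y) \<le> M Y - \<eta>/4 * (norm (rgrad G Y))^2 - \<eta> * lam * \<mu> / 2 * Ncons Y"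
    if Y: "Y \<in> ?S" for Y
  proof -
    have nD: "norm (transpose Y ** Y - mat 1) \<le> \<epsilon>" using Y by (simp add: StEps_def)
    have seg: "Y - t *\<^sub>R \<Lambda> Y \<in> ?S" if "0 \<le> t" "t \<le> \<eta>" for t using step[OF Y that] .
    have DGb: "norm (blinfun_apply (DG Y) (\<Lambda> Y)) \<le> L * norm (\<Lambda> Y)"
    proof (rule deriv_bound[OF G_deriv eta_pos])
      fix t :: real assume t: "0 \<le> t" "t \<le> \<eta>"
      show "norm (G (Y - t *\<^sub>R \<Lambda> Y) - G Y) \<le> L * norm (t *\<^sub>R \<Lambda> Y)"
        using L_lip[OF seg[OF t] Y] by simp
    qed
    have key: "GL Y \<bullet> \<Lambda> Y \<ge> (1/2) * (norm (rgrad G Y))^2 + lam * \<mu> * Ncons Y"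
      unfolding \<Lambda>_def
      by (rule key_ineq[OF nD eps lam L_pos Gb[OF Y] Sb[OF Y] DGb[unfolded \<Lambda>_def] mu' f_grad G_deriv GL_grad])
    have des: "M (Y - \<eta> *\<^sub>R \<Lambda> Y) \<le> M Y - \<eta> * (GL Y \<bullet> \<Lambda> Y) + Lg / 2 * \<eta>^2 * (norm (\<Lambda> Y))^2"
      unfolding M_def
    proof (rule descent[OF GL_grad less_imp_le[OF eta_pos]])
      fix t :: real assume t: "0 \<le> t" "t \<le> \<eta>"
      show "norm (GL Y - GL (Y - t *\<^sub>R \<Lambda> Y)) \<le> Lg * norm (t *\<^sub>R \<Lambda> Y)"
        using Lg_lip[OF Y seg[OF t]] by simp
    qed
    have nL: "(norm (\<Lambda> Y))^2 \<le> (norm (rgrad G Y))^2 + 4 * lam^2 * (1+\<epsilon>) * Ncons Y"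
    proof -
      define D where "D = transpose Y ** Y - mat 1"
      have XX: "transpose Y ** Y = D + mat 1" by (simp add: D_def)
      have DT: "transpose D = D" unfolding D_def by (rule D_T)
      have "(norm (Y ** D))^2 \<le> (1 + norm D) * (norm D)^2" by (rule norm_XD_bounds(2)[OF XX DT])
      also have "\<dots> \<le> (1 + \<epsilon>) * (norm D)^2" using nD unfolding D_def by (intro mult_right_mono) auto
      finally have w: "lam^2 * (norm (Y ** D))^2 \<le> lam^2 * ((1 + \<epsilon>) * (norm D)^2)" by (intro mult_left_mono) auto
      have "(norm (\<Lambda> Y))^2 = (norm (rgrad G Y))^2 + lam^2 * (norm (Y ** D))^2"
        unfolding \<Lambda>_def Lambda_field_def rgrad_def D_def by (rule norm_Lm2[OF D_T])
      moreover have N4: "(norm D)^2 = 4 * Ncons Y" by (simp add: Ncons_def D_def)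
      moreover have "lam^2 * ((1 + \<epsilon>) * (4 * Ncons Y)) = 4 * lam^2 * (1+\<epsilon>) * Ncons Y" by (simp only: mult_ac)
      ultimately show ?thesis using w by (simp only: N4)
    qed
    define a2 where "a2 = (norm (rgrad G Y))^2"
    define N where "N = Ncons Y"
    have a20: "0 \<le> a2" "0 \<le> N" by (auto simp: a2_def N_def Ncons_def)
    have c1: "Lg * \<eta> \<le> 1/2" using eta1 Lg_pos by (simp add: field_simps)
    have den: "0 < 4 * lam^2 * Lg * (1 + \<epsilon>)" using Lg_pos lam eps by simp
    have "\<eta> * (4 * lam^2 * Lg * (1 + \<epsilon>)) \<le> lam * \<mu>" using eta2 unfolding pos_le_divide_eq[OF den] .
    then have c2: "4 * lam^2 * Lg * (1 + \<epsilon>) * \<eta> \<le> lam * \<mu>" by (simp only: mult.commute)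
    have t1: "Lg / 2 * \<eta>^2 * a2 \<le> \<eta> / 4 * a2"
    proof -
      have "Lg / 2 * \<eta>^2 * a2 = (Lg * \<eta>) * (\<eta> / 2 * a2)" by (simp add: power2_eq_square)
      also have "\<dots> \<le> (1/2) * (\<eta> / 2 * a2)" using c1 eta_pos a20 by (intro mult_right_mono) auto
      finally show ?thesis by simp
    qed
    have t2: "Lg / 2 * \<eta>^2 * (4 * lam^2 * (1+\<epsilon>) * N) \<le> (lam * \<mu>) * (\<eta> / 2 * N)"
    proof -
      have "Lg / 2 * \<eta>^2 * (4 * lam^2 * (1+\<epsilon>) * N) = (4 * lam^2 * Lg * (1 + \<epsilon>) * \<eta>) * (\<eta> / 2 * N)"
        by (simp add: power2_eq_square)
      also have "\<dots> \<le> (lam * \<mu>) * (\<eta> / 2 * N)" using c2 eta_pos a20 by (intro mult_right_mono) auto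
      finally show ?thesis .
    qed
    have t3: "Lg / 2 * \<eta>^2 * (norm (\<Lambda> Y))^2 \<le> Lg / 2 * \<eta>^2 * (a2 + 4 * lam^2 * (1+\<epsilon>) * N)"
      using nL Lg_pos unfolding a2_def N_def by (intro mult_left_mono) auto
    have t3b: "Lg / 2 * \<eta>^2 * (a2 + 4 * lam^2 * (1+\<epsilon>) * N) = Lg / 2 * \<eta>^2 * a2 + Lg / 2 * \<eta>^2 * (4 * lam^2 * (1+\<epsilon>) * N)"
      by (simp only: distrib_left)
    have t4: "\<eta> * (GL Y \<bullet> \<Lambda> Y) \<ge> \<eta> * ((1/2) * a2 + lam * \<mu> * N)"
      using key eta_pos unfolding a2_def N_def by (intro mult_left_mono) auto
    have e1: "\<eta> * ((1/2) * a2 + lam * \<mu> * N) = 2 * (\<eta>/4 * a2) + 2 * (\<eta> * lam * \<mu> / 2 * N)"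
      by (simp add: algebra_simps)
    have e2: "(lam * \<mu>) * (\<eta> / 2 * N) = \<eta> * lam * \<mu> / 2 * N" by (simp add: algebra_simps)
    have "M (Y - \<eta> *\<^sub>R \<Lambda> Y) \<le> M Y - \<eta>/4 * a2 - \<eta> * lam * \<mu> / 2 * N"
      using des t1 t2 t3 t3b t4 e1 e2 by linarith
    then show ?thesis unfolding a2_def N_def .
  qed
  have inS: "X k \<in> ?S" for k
  proof (induction k)
    case 0 show ?case by (rule X0)
  next
    case (Suc k) show ?case unfolding iter \<Lambda>_def[symmetric] using step[OF Suc, of \<eta>] eta_pos by simp
  qed
  define u where "u k = \<eta>/4 * (norm (rgrad G (X k)))^2 + \<eta> * lam * \<mu> / 2 * Ncons (X k)" for k
  have dec: "M (X (Suc k)) \<le> M (X k) - u k" for k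
    using desc[OF inS[of k]] unfolding iter \<Lambda>_def[symmetric] u_def by simp
  have tele: "M (X n) + (\<Sum>k<n. u k) \<le> M (X 0)" for n
  proof (induction n)
    case 0 show ?case by simp
  next
    case (Suc n) then show ?case using dec[of n] by simp
  qed
  have total: "(\<Sum>k<Suc K. u k) \<le> M (X 0) - Lstar"
    using tele[of "Suc K"] Lstar[OF inS[of "Suc K"]] unfolding M_def by simp
  have uge1: "\<eta>/4 * (norm (rgrad G (X k)))^2 \<le> u k" and uge2: "\<eta> * lam * \<mu> / 2 * Ncons (X k) \<le> u k" for k
    unfolding u_def using eta_pos lam mupos by (auto simp: Ncons_def)
  have sub: "{1..K} \<subseteq> {..<Suc K}" by auto
  have S1: "(\<Sum>k=1..K. (norm (rgrad G (X k)))^2) \<le> 4 * (M (X 0) - Lstar) / \<eta>"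
  proof -
    have "(\<Sum>k=1..K. \<eta>/4 * (norm (rgrad G (X k)))^2) \<le> (\<Sum>k<Suc K. \<eta>/4 * (norm (rgrad G (X k)))^2)"
      by (rule sum_mono2[OF _ sub]) (use eta_pos in auto)
    also have "\<dots> \<le> (\<Sum>k<Suc K. u k)" by (rule sum_mono[OF uge1])
    also have "\<dots> \<le> M (X 0) - Lstar" by (rule total)
    finally have "\<eta>/4 * (\<Sum>k=1..K. (norm (rgrad G (X k)))^2) \<le> M (X 0) - Lstar" by (simp add: sum_distrib_left)
    then show ?thesis using eta_pos by (simp add: field_simps)
  qed
  have S2: "(\<Sum>k=1..K. Ncons (X k)) \<le> 2 * (M (X 0) - Lstar) / (\<eta> * (lam * \<mu>))"
  proof -
    have "(\<Sum>k=1..K. \<eta> * lam * \<mu> / 2 * Ncons (X k)) \<le> (\<Sum>k<Suc K. \<eta> * lam * \<mu> / 2 * Ncons (X k))"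
      by (rule sum_mono2[OF _ sub]) (use eta_pos lam mupos in \<open>auto simp: Ncons_def\<close>)
    also have "\<dots> \<le> (\<Sum>k<Suc K. u k)" by (rule sum_mono[OF uge2])
    also have "\<dots> \<le> M (X 0) - Lstar" by (rule total)
    finally have "\<eta> * lam * \<mu> / 2 * (\<Sum>k=1..K. Ncons (X k)) \<le> M (X 0) - Lstar" by (simp add: sum_distrib_left)
    then show ?thesis using eta_pos lam mupos by (simp add: field_simps)
  qed
  have Kpos: "0 < real K" using K by simp
  show ?thesis
  proof
    show "(1 / real K) * (\<Sum>k=1..K. (norm (rgrad G (X k)))^2) \<le> 4 * (merit f G \<mu> (X 0) - Lstar) / (\<eta> * real K)"
      using S1 Kpos eta_pos unfolding M_def by (simp add: field_simps)
    show "(1 / real K) * (\<Sum>k=1..K. Ncons (X k)) \<le> 2 * (merit f G \<mu> (X 0) - Lstar) / (\<eta> * (lam * \<mu>) * real K)"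
      using S2 Kpos eta_pos lam mupos unfolding M_def by (simp add: field_simps)
  qed
qed


end
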